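(* Consider the two-mode switched system $\dot x=f_1(x)+g(x)u$ if $q(x)\ge0$, $\dot x=f_2(x)+g(x)u$ if $q(x)\le0$, $y=h(x)$, with $f_1,f_2\in\mathcal{C}^1(\mathbb{R}^n,\mathbb{R}^n)$, $g\in\mathcal{C}^1(\mathbb{R}^n,\mathbb{R}^{n\times m})$, $h\in\mathcal{C}^1(\mathbb{R}^n,\mathbb{R}^p)$, $q\in\mathcal{C}^1(\mathbb{R}^n,\mathbb{R})$ such that $\{X_1:=\{q\ge0\},\mathbb{R}^n\},\{X_2:=\{q\le0\},\mathbb{R}^n\}$ form a proper partition of $\mathbb{R}^n$, $q(0)\ge0\Rightarrow f_1(0)=0$, $q(0)\le0\Rightarrow f_2(0)=0$, $\|g(x)\|\le\beta_g(|x|)$ for some $\beta_g\in\mathcal{C}(\mathbb{R},\mathbb{R}_+)$, and $|f_1(x)-f_2(x)|\le\beta_f(|x|)$ for some $\beta_f\in\mathcal{K}_\infty$. Let $\ell_1,\ell_2\in\mathcal{C}^1(\mathbb{R}^p,\mathbb{R}^n)$, $k:\mathbb{R}^n\to\mathbb{R}^m$ globally Lipschitz, $\widetilde g(x,z):=(g(x)-g(z))k(z)$, and let $F_e$ be the error map defined in the context. Suppose there exist $V_e\in\mathcal{C}^1(\mathbb{R}^n,\mathbb{R})$ and $\underline\psi_e,\overline\psi_e,\alpha_e,\rho_e\in\mathcal{K}_\infty$ such that $\underline\psi_e(|e|)\le V_e(e)\le\overline\psi_e(|e|)$ and $|\frac{\partial V_e}{\partial e}(e)|\le\rho_e(|e|)$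 for all $e$; for all $x,z\in\mathbb{R}^n$ and each $i\in\{1,2\}$, with $e=x-z$, $$\Big\langle\frac{\partial V_e}{\partial e}(e),\,f_i(x)-f_i(z)-\ell_i(h(x)-h(z))+\widetilde g(x,z)\Big\rangle\le-\alpha_e(|e|);$$ and there is $\theta_e\in\mathcal{K}_\infty$ with $\theta_e(s)\le\alpha_e(s)/\rho_e(s)$ for all $s\ge0$. Then there exist $\widehat\gamma_e\in\mathcal{K}$ and $\widehat\alpha_e\in\mathcal{K}_\infty$ such that for all $x,e\in\mathbb{R}^n$, $|e|\ge\widehat\gamma_e(|x|)\Rightarrow\langle\frac{\partial V_e}{\partial e}(e),f_e\rangle\le-\widehat\alpha_e(|e|)$ for all $f_e\in F_e(x,e)$; consequently the system $\dot e\in F_e(x,e)$ is ISS with respect to $x$.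
   Context: Proper partition $\{X_i,\mathcal{O}_i\}$: closed $X_i$, open $\mathcal{O}_i\supseteq X_i$, $\bigcup X_i=\mathbb{R}^n$, $\overline{\operatorname{int}X_i}=X_i$, $\operatorname{bd}X_i$ of measure zero, $X_i\cap X_j=\operatorname{bd}X_i\cap\operatorname{bd}X_j$ for $i\neq j$. With $z=x-e$, the discontinuous error vector field $f_e(x,e)$ equals $f_1(x)-f_1(z)-\ell_1(h(x)-h(z))+\widetilde g(x,z)$ if $q(x)\ge0,q(z)\ge0$; $f_2(x)-f_1(z)-\ell_1(h(x)-h(z))+\widetilde g(x,z)$ if $q(x)\le0,q(z)\ge0$; $f_1(x)-f_2(z)-\ell_2(h(x)-h(z))+\widetilde g(x,z)$ if $q(x)\ge0,q(z)\le0$; $f_2(x)-f_2(z)-\ell_2(h(x)-h(z))+\widetilde g(x,z)$ if $q(x)\le0,q(z)\le0$ (at points where several cases apply, all applicable expressions are admitted). $F_e(x,e)$ is the Filippov regularization of this map (in the state $e$, with $x$ as input): $F_e(x,e)=\bigcap_{\delta>0}\bigcap_{\mu(S)=0}\overline{\operatorname{co}}\{f_e(x,e'):e'\in B(e,\delta)\setminus S\}$, $\mu$ Lebesgue measure. ISS w.r.t. $x$: for every measurable locally essentially bounded $x(\cdot)$, all Carathéodory solutions satisfy $|e(t)|\le\beta(|e(0)|,t)+\chi(\operatorname{ess\,sup}_{[0,t]}|x|)$ for some $\beta\in\mathcal{KL}$, $\chi\in\mathcal{K}$. *)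

theory Defs
  imports "HOL-Analysis.Analysis"
begin

definition C1_map :: "('a::real_normed_vector \<Rightarrow> 'b::real_normed_vector) \<Rightarrow> bool" where
  "C1_map f \<longleftrightarrow> (\<exists>f'. (\<forall>x. (f has_derivative blinfun_apply (f' x)) (at x)) \<and> continuous_on UNIV f')"

definition class_K :: "(real \<Rightarrow> real) \<Rightarrow> bool" where
  "class_K a \<longleftrightarrow> continuous_on {0..} a \<and> a 0 = 0 \<and> strict_mono_on {0..} a"

definition class_Kinf :: "(real \<Rightarrow> real) \<Rightarrow> bool" where
  "class_Kinf a \<longleftrightarrow> class_K a \<and> filterlim a at_top at_top"

definition class_KL :: "(real \<Rightarrow> real \<Rightarrow> real) \<Rightarrow> bool" where
  "class_KL b \<longleftrightarrow> (\<forall>t\<ge>0. class_K (\<lambda>s. b s t)) \<and>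
     (\<forall>s\<ge>0. antimono_on {0..} (\<lambda>t. b s t) \<and> ((\<lambda>t. b s t) \<longlongrightarrow> 0) at_top)"

definition proper_partition :: "'i set \<Rightarrow> ('i \<Rightarrow> 'a::euclidean_space set) \<Rightarrow> ('i \<Rightarrow> 'a set) \<Rightarrow> bool" where
  "proper_partition I X Op \<longleftrightarrow>
     (\<forall>i\<in>I. closed (X i) \<and> open (Op i) \<and> X i \<subseteq> Op i \<and> closure (interior (X i)) = X i
             \<and> negligible (frontier (X i))) \<and>
     (\<Union>i\<in>I. X i) = UNIV \<and>
     (\<forall>i\<in>I. \<forall>j\<in>I. i \<noteq> j \<longrightarrow> X i \<inter> X j = frontier (X i) \<inter> frontier (X j))"

text \<open>\<open>g~(x,z) = (g(x) - g(z)) k(z)\<close>; matrices \<open>real^'m^'n\<close> are n-by-m.\<close>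
definition gtilde :: "(real^'n::finite \<Rightarrow> real^'m::finite^'n) \<Rightarrow> (real^'n \<Rightarrow> real^'m)
     \<Rightarrow> real^'n \<Rightarrow> real^'n \<Rightarrow> real^'n" where
  "gtilde g k x z = (g x - g z) *v k z"

text \<open>The (multi-valued) discontinuous error vector field \<open>f_e(x,e)\<close>, with \<open>z = x - e\<close>;
  at points where several cases apply, all applicable expressions are admitted.\<close>
definition fe_set ::
  "(real^'n::finite \<Rightarrow> real^'n) \<Rightarrow> (real^'n \<Rightarrow> real^'n) \<Rightarrow> (real^'n \<Rightarrow> real^'m::finite^'n)
   \<Rightarrow> (real^'n \<Rightarrow> real) \<Rightarrow> (real^'n \<Rightarrow> real^'p::finite) \<Rightarrow> (real^'p \<Rightarrow> real^'n) \<Rightarrow> (real^'p \<Rightarrow> real^'n)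
   \<Rightarrow> (real^'n \<Rightarrow> real^'m) \<Rightarrow> real^'n \<Rightarrow> real^'n \<Rightarrow> (real^'n) set" where
  "fe_set f1 f2 g q h l1 l2 k x e =
    (let z = x - e in
     {v. (q x \<ge> 0 \<and> q z \<ge> 0 \<and> v = f1 x - f1 z - l1 (h x - h z) + gtilde g k x z) \<or>
         (q x \<le> 0 \<and> q z \<ge> 0 \<and> v = f2 x - f1 z - l1 (h x - h z) + gtilde g k x z) \<or>
         (q x \<ge> 0 \<and> q z \<le> 0 \<and> v = f1 x - f2 z - l2 (h x - h z) + gtilde g k x z) \<or>
         (q x \<le> 0 \<and> q z \<le> 0 \<and> v = f2 x - f2 z - l2 (h x - h z) + gtilde g k x z)})"

definition filippov :: "('a::euclidean_space \<Rightarrow> 'b::euclidean_space set) \<Rightarrow> 'a \<Rightarrow> 'b set" where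
  "filippov F e = (\<Inter>\<delta>\<in>{0<..}. \<Inter>S\<in>{S. negligible S}.
      closure (convex hull (\<Union>e'\<in>ball e \<delta> - S. F e')))"

definition Fe where
  "Fe f1 f2 g q h l1 l2 k x = filippov (fe_set f1 f2 g q h l1 l2 k x)"

definition ess_sup_norm :: "(real \<Rightarrow> 'a::real_normed_vector) \<Rightarrow> real \<Rightarrow> real" where
  "ess_sup_norm x t = Inf {c. c \<ge> 0 \<and> (\<exists>N. negligible N \<and> (\<forall>s\<in>{0..t} - N. norm (x s) \<le> c))}"

definition loc_ess_bounded :: "(real \<Rightarrow> 'a::real_normed_vector) \<Rightarrow> bool" where
  "loc_ess_bounded x \<longleftrightarrow> (\<forall>t\<ge>0. \<exists>c. \<exists>N. negligible N \<and> (\<forall>s\<in>{0..t} - N. norm (x s) \<le> c))"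

text \<open>Caratheodory solution of \<open>e' \<in> F(x(t), e)\<close> on \<open>[0,T]\<close>: absolutely continuous,
  i.e. an indefinite Lebesgue integral, with derivative in \<open>F\<close> almost everywhere.\<close>
definition carath_solution ::
  "('x \<Rightarrow> 'a::euclidean_space \<Rightarrow> 'a set) \<Rightarrow> (real \<Rightarrow> 'x) \<Rightarrow> real \<Rightarrow> (real \<Rightarrow> 'a) \<Rightarrow> bool" where
  "carath_solution F x T e \<longleftrightarrow> T > 0 \<and> (\<exists>v. v absolutely_integrable_on {0..T} \<and>
     (\<forall>t\<in>{0..T}. e t = e 0 + integral {0..t} v) \<and>
     (\<exists>N. negligible N \<and> (\<forall>t\<in>{0..T} - N. v t \<in> F (x t) (e t))))"

definition ISS_wrt_input :: "('x::euclidean_space \<Rightarrow> 'a::euclidean_space \<Rightarrow> 'a set) \<Rightarrow> bool" where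
  "ISS_wrt_input F \<longleftrightarrow> (\<exists>\<beta> chi. class_KL \<beta> \<and> class_K chi \<and>
     (\<forall>x. x \<in> borel_measurable (lebesgue_on {0..}) \<longrightarrow> loc_ess_bounded x \<longrightarrow>
       (\<forall>T e. carath_solution F x T e \<longrightarrow>
          (\<forall>t\<in>{0..T}. norm (e t) \<le> \<beta> (norm (e 0)) t + chi (ess_sup_norm x t)))))"

end

theory Submission imports Defs begin

lemma K_nonneg: "class_K a \<Longrightarrow> 0 \<le> s \<Longrightarrow> 0 \<le> a s"
  unfolding class_K_def
  by (metis atLeast_iff order.refl strict_mono_on_less_eq)

lemma K_le: "class_K a \<Longrightarrow> 0 \<le> x \<Longrightarrow> x \<le> y \<Longrightarrow> a x \<le> a y"
  unfolding class_K_def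
  by (metis atLeast_iff order.trans strict_mono_on_less_eq)

lemma K_less: "class_K a \<Longrightarrow> 0 \<le> x \<Longrightarrow> x < y \<Longrightarrow> a x < a y"
  unfolding class_K_def
  by (metis atLeast_iff less_eq_real_def order.strict_trans1 strict_mono_on_less)

lemma K_le_iff: "class_K a \<Longrightarrow> 0 \<le> x \<Longrightarrow> 0 \<le> y \<Longrightarrow> a x \<le> a y \<longleftrightarrow> x \<le> y"
  unfolding class_K_def
  using strict_mono_on_less_eq[of "{0..}" a x y] by simp

lemma K_pos: "class_K a \<Longrightarrow> 0 < s \<Longrightarrow> 0 < a s"
  using K_less[of a 0 s] unfolding class_K_def by simp

lemma K_comp:
  assumes "class_K a" "class_K b" shows "class_K (\<lambda>s. a (b s))"
proof -
  have nn: "\<And>s. s \<in> {0..} \<Longrightarrow> b s \<in> {0..}" using K_nonneg[OF assms(2)] by auto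
  have "continuous_on {0..} (\<lambda>s. a (b s))"
    by (rule continuous_on_compose2[of "{0..}" a]) (use assms nn in \<open>auto simp: class_K_def\<close>)
  moreover have "strict_mono_on {0..} (\<lambda>s. a (b s))"
    by (rule strict_mono_onI) (use assms nn in \<open>auto simp: class_K_def strict_mono_on_def\<close>)
  ultimately show ?thesis using assms by (simp add: class_K_def)
qed

lemma Kinf_comp:
  assumes "class_Kinf a" "class_Kinf b" shows "class_Kinf (\<lambda>s. a (b s))"
  using assms K_comp unfolding class_Kinf_def
  using filterlim_compose by blast

lemma K_scale:
  assumes "class_K a" "c > 0" shows "class_K (\<lambda>s. c * a s)"
  using assms unfolding class_K_def
  by (auto intro!: continuous_intros strict_mono_onI simp: strict_mono_on_def)

lemma Kinf_scale:
  assumes "class_Kinf a" "c > 0" shows "class_Kinf (\<lambda>s. c * a s)"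
  using assms K_scale unfolding class_Kinf_def
  using filterlim_tendsto_pos_mult_at_top tendsto_const by blast

definition kinv :: "(real \<Rightarrow> real) \<Rightarrow> real \<Rightarrow> real" where
  "kinv a y = (THE x. 0 \<le> x \<and> a x = y)"

lemma Kinf_surj:
  assumes "class_Kinf a" "0 \<le> y" shows "\<exists>x\<ge>0. a x = y"
proof -
  from assms(1) have "eventually (\<lambda>x. y \<le> a x) at_top"
    unfolding class_Kinf_def filterlim_at_top by blast
  then obtain X where X: "\<And>x. x \<ge> X \<Longrightarrow> y \<le> a x" by (auto simp: eventually_at_top_linorder)
  let ?X = "max X 0"
  have "a 0 \<le> y" using assms by (simp add: class_Kinf_def class_K_def)
  moreover have "y \<le> a ?X" using X by simp
  moreover have "continuous_on {0..?X} a" using assms unfolding class_Kinf_def class_K_def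
    by (auto intro: continuous_on_subset)
  ultimately show ?thesis using IVT'[of a 0 y ?X] by auto
qed

lemma kinv:
  assumes "class_Kinf a" "0 \<le> y" shows "0 \<le> kinv a y" "a (kinv a y) = y"
proof -
  obtain x where x: "x \<ge> 0" "a x = y" using Kinf_surj[OF assms] by blast
  have aK: "class_K a" using assms class_Kinf_def by blast
  have u: "x' = x" if "0 \<le> x' \<and> a x' = y" for x'
  proof -
    have "x' \<le> x" using K_le_iff[OF aK, of x' x] that x by simp
    moreover have "x \<le> x'" using K_le_iff[OF aK, of x x'] that x by simp
    ultimately show ?thesis by linarith
  qed
  have "kinv a y = x" unfolding kinv_def
    using x u by (intro the_equality) blast+
  then show "0 \<le> kinv a y" "a (kinv a y) = y" using x by auto
qed

lemma kinv_left:
  assumes "class_Kinf a" "0 \<le> x" shows "kinv a (a x) = x"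
proof -
  have aK: "class_K a" using assms class_Kinf_def by blast
  have y: "0 \<le> a x" using K_nonneg[OF aK assms(2)] .
  have "a (kinv a (a x)) = a x" "0 \<le> kinv a (a x)" using kinv[OF assms(1) y] by auto
  then have "kinv a (a x) \<le> x" "x \<le> kinv a (a x)"
    using K_le_iff[OF aK, of x "kinv a (a x)"] K_le_iff[OF aK, of "kinv a (a x)" x] assms by simp_all
  then show ?thesis by linarith
qed

lemma kinv_le_iff:
  assumes "class_Kinf a" "0 \<le> y" "0 \<le> x" shows "kinv a y \<le> x \<longleftrightarrow> y \<le> a x"
  using kinv[OF assms(1,2)] K_le_iff[of a "kinv a y" x] assms by (simp add: class_Kinf_def)

lemma kinv_ge_iff:
  assumes "class_Kinf a" "0 \<le> y" "0 \<le> x" shows "x \<le> kinv a y \<longleftrightarrow> a x \<le> y"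
  using kinv[OF assms(1,2)] K_le_iff[of a x "kinv a y"] assms by (simp add: class_Kinf_def)

lemma Kinf_kinv:
  assumes a: "class_Kinf a" shows "class_Kinf (kinv a)"
proof -
  have aK: "class_K a" using a class_Kinf_def by blast
  have sm: "strict_mono_on {0..} (kinv a)"
  proof (rule strict_mono_onI)
    fix y1 y2 :: real assume y: "y1 \<in> {0..}" "y2 \<in> {0..}" "y1 < y2"
    show "kinv a y1 < kinv a y2"
    proof (rule ccontr)
      assume "\<not> kinv a y1 < kinv a y2"
      then have "a (kinv a y2) \<le> a (kinv a y1)"
        using K_le[OF aK, of "kinv a y2" "kinv a y1"] kinv[OF a, of y2] y by simp
      then show False using kinv[OF a, of y1] kinv[OF a, of y2] y by simp
    qed
  qed
  have a0: "a 0 = 0" using aK by (simp add: class_K_def)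
  have z: "kinv a 0 = 0" using kinv_left[OF a, of 0] a0 by simp
  have cont: "continuous_on {0..} (kinv a)"
  proof (rule continuous_on_eq_continuous_within[THEN iffD2], rule ballI)
    fix y :: real assume y: "y \<in> {0..}"
    define n where "n = kinv a y + 1"
    have n0: "0 \<le> n" using kinv[OF a, of y] y n_def by auto
    have yn: "y < a n" using kinv[OF a, of y] y K_less[OF aK, of "kinv a y" n] n_def by auto
    have img: "a ` {0..n} = {0..a n}"
    proof
      show "a ` {0..n} \<subseteq> {0..a n}" using K_nonneg[OF aK] K_le[OF aK] by auto
      show "{0..a n} \<subseteq> a ` {0..n}"
      proof
        fix w assume w: "w \<in> {0..a n}"
        then have w0: "0 \<le> w" by simp
        then have "kinv a w \<le> n" using kinv_le_iff[OF a w0 n0] w by simp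
        then have "kinv a w \<in> {0..n}" using kinv[OF a w0] by simp
        moreover have "w = a (kinv a w)" using kinv[OF a w0] by simp
        ultimately show "w \<in> a ` {0..n}" by blast
      qed
    qed
    have cn: "continuous_on {0..n} a" using aK unfolding class_K_def
      by (rule conjE) (auto intro: continuous_on_subset)
    have inv: "\<forall>x\<in>{0..n}. kinv a (a x) = x" using kinv_left[OF a] by simp
    have "continuous_on (a ` {0..n}) (kinv a)"
      by (rule continuous_on_inv[OF cn compact_Icc inv])
    then have "continuous_on {0..a n} (kinv a)" unfolding img .
    moreover have "y \<in> {0..a n}" using y yn by simp
    ultimately have c1: "continuous (at y within {0..a n}) (kinv a)"
      using continuous_on_eq_continuous_within by blast
    have "at y within {0..} = at y within {0..a n}"
      by (rule at_within_nhd[of y "{..<a n}"]) (use yn in auto)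
    then show "continuous (at y within {0..}) (kinv a)" using c1 by simp
  qed
  have lim: "filterlim (kinv a) at_top at_top"
    unfolding filterlim_at_top eventually_at_top_linorder
  proof
    fix Z :: real
    have "Z \<le> kinv a y" if "y \<ge> a (max Z 0)" for y
    proof -
      have "0 \<le> a (max Z 0)" using K_nonneg[OF aK] by simp
      then have "0 \<le> y" using that by linarith
      then have "max Z 0 \<le> kinv a y" using kinv_ge_iff[OF a, of y "max Z 0"] that by simp
      then show ?thesis by simp
    qed
    then show "\<exists>N. \<forall>y\<ge>N. Z \<le> kinv a y" by blast
  qed
  show ?thesis unfolding class_Kinf_def class_K_def using sm z cont lim by blast
qed

lemma continuous_on_mvmult[continuous_intros]:
  fixes A :: "'a::topological_space \<Rightarrow> real^'m::finite^'n::finite" and b :: "'a \<Rightarrow> real^'m"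
  assumes "continuous_on S A" "continuous_on S b"
  shows "continuous_on S (\<lambda>y. A y *v b y)"
  unfolding matrix_vector_mult_def
  by (intro continuous_intros continuous_on_component assms)

lemma C1_cont: assumes "C1_map f" shows "continuous_on UNIV f"
proof -
  obtain f' where "\<forall>x. (f has_derivative blinfun_apply (f' x)) (at x)"
    using assms unfolding C1_map_def by blast
  then show ?thesis by (intro has_derivative_continuous_on) auto
qed

lemma filippov_le:
  fixes F :: "'a::euclidean_space \<Rightarrow> 'b::euclidean_space set"
  assumes H: "\<And>\<epsilon>. \<epsilon> > 0 \<Longrightarrow> \<exists>\<delta>>0. \<forall>e'\<in>ball e \<delta>. \<forall>v\<in>F e'. D \<bullet> v \<le> c + \<epsilon>"
    and w: "w \<in> filippov F e"
  shows "D \<bullet> w \<le> c"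
proof (rule field_le_epsilon)
  fix \<epsilon> :: real assume "\<epsilon> > 0"
  then obtain \<delta> where d: "\<delta> > 0" "\<forall>e'\<in>ball e \<delta>. \<forall>v\<in>F e'. D \<bullet> v \<le> c + \<epsilon>" using H by blast
  have "w \<in> closure (convex hull (\<Union>e'\<in>ball e \<delta> - {}. F e'))"
    using w d(1) unfolding filippov_def by blast
  moreover have "(\<Union>e'\<in>ball e \<delta> - {}. F e') \<subseteq> {v. D \<bullet> v \<le> c + \<epsilon>}" using d(2) by blast
  then have "convex hull (\<Union>e'\<in>ball e \<delta> - {}. F e') \<subseteq> {v. D \<bullet> v \<le> c + \<epsilon>}"
    by (rule hull_minimal) (rule convex_halfspace_le)
  then have "closure (convex hull (\<Union>e'\<in>ball e \<delta> - {}. F e')) \<subseteq> {v. D \<bullet> v \<le> c + \<epsilon>}"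
    by (rule closure_minimal) (rule closed_halfspace_le)
  ultimately show "D \<bullet> w \<le> c + \<epsilon>" by blast
qed

lemma part1:
  fixes f1 f2 :: "real^'n \<Rightarrow> real^'n"
    and g :: "real^'n \<Rightarrow> real^'m^'n"
    and h :: "real^'n \<Rightarrow> real^'p"
    and q :: "real^'n \<Rightarrow> real"
    and l1 l2 :: "real^'p \<Rightarrow> real^'n"
    and k :: "real^'n \<Rightarrow> real^'m"
    and dVe :: "real^'n \<Rightarrow> real^'n"
  assumes cont: "continuous_on UNIV f1" "continuous_on UNIV f2" "continuous_on UNIV g"
      "continuous_on UNIV h" "continuous_on UNIV l1" "continuous_on UNIV l2" "continuous_on UNIV k"
    and decr1: "\<forall>x z. dVe (x - z) \<bullet> (f1 x - f1 z - l1 (h x - h z) + gtilde g k x z) \<le> - \<alpha> (norm (x - z))"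
    and decr2: "\<forall>x z. dVe (x - z) \<bullet> (f2 x - f2 z - l2 (h x - h z) + gtilde g k x z) \<le> - \<alpha> (norm (x - z))"
    and B: "norm (dVe e) * norm (f1 x - f2 x) \<le> \<alpha> (norm e) - \<alpha>h"
  shows "\<forall>fe\<in>Fe f1 f2 g q h l1 l2 k x e. dVe e \<bullet> fe \<le> - \<alpha>h"
proof
  fix fe assume fe: "fe \<in> Fe f1 f2 g q h l1 l2 k x e"
  define D where "D = dVe e"
  define E1 where "E1 z = f1 x - f1 z - l1 (h x - h z) + gtilde g k x z" for z
  define E2 where "E2 z = f2 x - f2 z - l2 (h x - h z) + gtilde g k x z" for z
  define \<psi> where "\<psi> e' = max (D \<bullet> E1 (x - e')) (D \<bullet> E2 (x - e'))" for e'
  define C where "C = norm D * norm (f1 x - f2 x)"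
  have gt: "continuous_on UNIV (\<lambda>z. gtilde g k x z)"
    unfolding gtilde_def by (intro continuous_intros cont)
  have l1c: "continuous_on UNIV (\<lambda>z. l1 (h x - h z))"
    by (rule continuous_on_compose2[OF cont(5)]) (auto intro!: continuous_intros cont(4))
  have l2c: "continuous_on UNIV (\<lambda>z. l2 (h x - h z))"
    by (rule continuous_on_compose2[OF cont(6)]) (auto intro!: continuous_intros cont(4))
  have E1c: "continuous_on UNIV E1" unfolding E1_def
    by (intro continuous_intros cont gt l1c)
  have E2c: "continuous_on UNIV E2" unfolding E2_def
    by (intro continuous_intros cont gt l2c)
  have psic: "continuous_on UNIV \<psi>" unfolding \<psi>_def
    by (intro continuous_intros continuous_on_compose2[OF E1c] continuous_on_compose2[OF E2c]) auto
  have psie: "\<psi> e \<le> - \<alpha> (norm e)"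
  proof -
    have "D \<bullet> E1 (x - e) \<le> - \<alpha> (norm e)" using decr1[rule_format, of x "x - e"]
      by (simp add: D_def E1_def)
    moreover have "D \<bullet> E2 (x - e) \<le> - \<alpha> (norm e)" using decr2[rule_format, of x "x - e"]
      by (simp add: D_def E2_def)
    ultimately show ?thesis by (simp add: \<psi>_def)
  qed
  have c1: "D \<bullet> (f2 x - f1 x) \<le> C" unfolding C_def
    using norm_cauchy_schwarz[of D "f2 x - f1 x"] by (simp add: norm_minus_commute)
  have c2: "D \<bullet> (f1 x - f2 x) \<le> C" unfolding C_def
    using norm_cauchy_schwarz[of D "f1 x - f2 x"] by simp
  have vb: "D \<bullet> v \<le> \<psi> e' + C" if v: "v \<in> fe_set f1 f2 g q h l1 l2 k x e'" for v e'
  proof -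
    let ?z = "x - e'"
    have a1: "D \<bullet> E1 ?z \<le> \<psi> e'" "D \<bullet> E2 ?z \<le> \<psi> e'" by (simp_all add: \<psi>_def)
    have "v = E1 ?z \<or> v = E1 ?z + (f2 x - f1 x) \<or> v = E2 ?z + (f1 x - f2 x) \<or> v = E2 ?z"
      using v unfolding fe_set_def Let_def E1_def E2_def by (auto simp: algebra_simps)
    moreover have "D \<bullet> (E1 ?z + (f2 x - f1 x)) = D \<bullet> E1 ?z + D \<bullet> (f2 x - f1 x)"
      by (simp add: inner_add_right)
    moreover have "D \<bullet> (E2 ?z + (f1 x - f2 x)) = D \<bullet> E2 ?z + D \<bullet> (f1 x - f2 x)"
      by (simp add: inner_add_right)
    moreover have "0 \<le> C" unfolding C_def by simp
    ultimately show ?thesis using a1 c1 c2 by (smt (verit))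
  qed
  have "D \<bullet> fe \<le> - \<alpha>h"
  proof (rule filippov_le[where F = "fe_set f1 f2 g q h l1 l2 k x" and e = e])
    show "fe \<in> filippov (fe_set f1 f2 g q h l1 l2 k x) e" using fe unfolding Fe_def .
  next
    fix \<epsilon> :: real assume "\<epsilon> > 0"
    then obtain \<delta> where d: "\<delta> > 0" "\<forall>e'. dist e' e < \<delta> \<longrightarrow> dist (\<psi> e') (\<psi> e) < \<epsilon>"
      using psic unfolding continuous_on_iff by blast
    have "\<forall>e'\<in>ball e \<delta>. \<forall>v\<in>fe_set f1 f2 g q h l1 l2 k x e'. D \<bullet> v \<le> - \<alpha>h + \<epsilon>"
    proof (intro ballI)
      fix e' v assume e': "e' \<in> ball e \<delta>" and v: "v \<in> fe_set f1 f2 g q h l1 l2 k x e'"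
      have "dist e' e < \<delta>" using e' by (simp add: dist_commute)
      then have "dist (\<psi> e') (\<psi> e) < \<epsilon>" using d(2) by blast
      then have "\<psi> e' < \<psi> e + \<epsilon>" by (simp add: dist_real_def)
      moreover have "\<psi> e + C \<le> - \<alpha>h" using psie B unfolding C_def D_def by linarith
      ultimately show "D \<bullet> v \<le> - \<alpha>h + \<epsilon>" using vb[OF v] by linarith
    qed
    then show "\<exists>\<delta>>0. \<forall>e'\<in>ball e \<delta>. \<forall>v\<in>fe_set f1 f2 g q h l1 l2 k x e'. D \<bullet> v \<le> - \<alpha>h + \<epsilon>"
      using d(1) by blast
  qed
  then show "dVe e \<bullet> fe \<le> - \<alpha>h" by (simp add: D_def)
qed

lemma DL:
  fixes V :: "'a::euclidean_space \<Rightarrow> real" and dV :: "'a \<Rightarrow> 'a" and v e :: "real \<Rightarrow> 'a"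
  assumes Vd: "\<And>y. (V has_derivative (\<lambda>w. dV y \<bullet> w)) (at y)" and dVc: "continuous_on UNIV dV"
    and vi: "v integrable_on {a..b}" and nvi: "(\<lambda>r. norm (v r)) integrable_on {a..b}"
    and ee: "\<And>t. t \<in> {a..b} \<Longrightarrow> e t = e a + integral {a..t} v"
    and N: "negligible N" and bnd: "\<And>r. r \<in> {a..b} - N \<Longrightarrow> dV (e r) \<bullet> v r \<le> - m"
    and ab: "a \<le> b"
  shows "V (e b) - V (e a) \<le> - m * (b - a)"
proof -
  define G where "G t = integral {a..t} (\<lambda>r. norm (v r))" for t
  have ec: "continuous_on {a..b} e"
  proof (rule continuous_on_eq)
    show "continuous_on {a..b} (\<lambda>t. e a + integral {a..t} v)"
      by (rule continuous_on_add[OF continuous_on_const indefinite_integral_continuous_1[OF vi]])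
    show "\<And>t. t \<in> {a..b} \<Longrightarrow> e a + integral {a..t} v = e t" using ee by metis
  qed
  have Vc: "continuous_on UNIV V"
    by (rule has_derivative_continuous_on[where f' = "\<lambda>y w. dV y \<bullet> w"]) (use Vd in simp)
  have Gc: "continuous_on {a..b} G" unfolding G_def by (rule indefinite_integral_continuous_1[OF nvi])
  have dVec: "continuous_on {a..b} (\<lambda>r. dV (e r))"
    by (rule continuous_on_compose2[OF dVc ec]) simp
  have Vec: "continuous_on {a..b} (\<lambda>r. V (e r))"
    by (rule continuous_on_compose2[OF Vc ec]) simp
  have vsub: "v integrable_on {t..t'}" "(\<lambda>r. norm (v r)) integrable_on {t..t'}"
    if "a \<le> t" "t' \<le> b" for t t'
    using integrable_on_subinterval[OF vi, of t t'] integrable_on_subinterval[OF nvi, of t t'] that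
    by auto
  have incr: "e t' - e t = integral {t..t'} v" "G t' - G t = integral {t..t'} (\<lambda>r. norm (v r))"
    if "a \<le> t" "t \<le> t'" "t' \<le> b" for t t'
  proof -
    have "integral {a..t} v + integral {t..t'} v = integral {a..t'} v"
      by (rule Henstock_Kurzweil_Integration.integral_combine) (use that vsub[of a t'] in auto)
    moreover have "e t' = e a + integral {a..t'} v" "e t = e a + integral {a..t} v"
      using ee[of t'] ee[of t] that by auto
    ultimately show "e t' - e t = integral {t..t'} v" by (simp add: algebra_simps)
    have "integral {a..t} (\<lambda>r. norm (v r)) + integral {t..t'} (\<lambda>r. norm (v r)) = integral {a..t'} (\<lambda>r. norm (v r))"
      by (rule Henstock_Kurzweil_Integration.integral_combine) (use that vsub[of a t'] in auto)
    then show "G t' - G t = integral {t..t'} (\<lambda>r. norm (v r))" unfolding G_def by (simp add: algebra_simps)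
  qed
  have Ga: "G a = 0" unfolding G_def by simp
  have Gb: "0 \<le> G b" unfolding G_def by (rule integral_nonneg[OF nvi]) simp
  have key: "V (e b) + m * (b - a) - 2 * \<epsilon> * G b \<le> V (e a)" if \<epsilon>: "\<epsilon> > 0" for \<epsilon>
  proof -
    define F where "F t = V (e t) + m * (t - a) - 2 * \<epsilon> * G t" for t
    have Fc: "continuous_on {a..b} F" unfolding F_def
      by (intro continuous_on_diff continuous_on_add continuous_on_mult continuous_on_const continuous_on_id Vec Gc)
    have local: "\<exists>\<delta>>0. \<forall>t'. t < t' \<and> t' < t + \<delta> \<and> t' \<le> b \<longrightarrow> F t' \<le> F t"
      if t: "a \<le> t" "t < b" for t
    proof -
      define y where "y = e t"
      define Dd where "Dd = dV y"
      obtain d1 where d1: "d1 > 0" "\<And>z. norm (z - y) < d1 \<Longrightarrow> norm (V z - V y - Dd \<bullet> (z - y)) \<le> \<epsilon> * norm (z - y)"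
        using Vd[of y] \<epsilon> unfolding has_derivative_at_alt Dd_def by blast
      have tab: "t \<in> {a..b}" using t by simp
      obtain d2 where d2: "d2 > 0" "\<And>r. r \<in> {a..b} \<Longrightarrow> dist r t < d2 \<Longrightarrow> dist (dV (e r)) (dV (e t)) < \<epsilon>"
        using dVec tab \<epsilon> unfolding continuous_on_iff by metis
      obtain d3 where d3: "d3 > 0" "\<And>r. r \<in> {a..b} \<Longrightarrow> dist r t < d3 \<Longrightarrow> dist (e r) (e t) < d1"
        using ec tab d1(1) unfolding continuous_on_iff by metis
      have "F t' \<le> F t" if t': "t < t'" "t' < t + min d2 d3" "t' \<le> b" for t'
      proof -
        have t'ab: "t' \<in> {a..b}" using t t' by simp
        have m3: "min d2 d3 \<le> d3" by simp
        have "t' - t < d3" using t'(2) m3 by linarith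
        then have "dist t' t < d3" using t' by (simp add: dist_real_def)
        then have ny: "norm (e t' - y) < d1" using d3(2)[OF t'ab] by (simp add: dist_norm y_def)
        have A: "V (e t') - V y \<le> Dd \<bullet> (e t' - y) + \<epsilon> * norm (e t' - y)"
          using d1(2)[OF ny] by (simp add: abs_le_iff)
        have inc: "e t' - y = integral {t..t'} v" using incr(1)[of t t'] t t' by (simp add: y_def)
        have vi': "v integrable_on {t..t'}" "(\<lambda>r. norm (v r)) integrable_on {t..t'}"
          using vsub[of t t'] t t' by auto
        have B: "Dd \<bullet> integral {t..t'} v = integral {t..t'} (\<lambda>r. Dd \<bullet> v r)"
          using integral_linear[OF vi'(1) bounded_linear_inner_right[of Dd]] by (simp add: o_def)
        have Dvi: "(\<lambda>r. Dd \<bullet> v r) integrable_on {t..t'}"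
          using integrable_linear[OF vi'(1) bounded_linear_inner_right[of Dd]] by (simp add: o_def)
        define f' where "f' r = (if r \<in> N then - m + \<epsilon> * norm (v r) else Dd \<bullet> v r)" for r
        have sp: "integral {t..t'} (\<lambda>r. Dd \<bullet> v r) = integral {t..t'} f'"
          by (rule integral_spike[OF N]) (simp add: f'_def)
        have f'i: "f' integrable_on {t..t'}"
          by (rule integrable_spike[OF Dvi N]) (simp add: f'_def)
        have rhsi: "(\<lambda>r. - m + \<epsilon> * norm (v r)) integrable_on {t..t'}"
          by (intro integrable_add integrable_const_ivl integrable_on_mult_right vi'(2))
        have f'le: "f' r \<le> - m + \<epsilon> * norm (v r)" if r: "r \<in> {t..t'}" for r
        proof (cases "r \<in> N")
          case True then show ?thesis by (simp add: f'_def)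
        next
          case False
          have rab: "r \<in> {a..b}" using r t t' by simp
          have m2: "min d2 d3 \<le> d2" by simp
          have rr: "t \<le> r" "r \<le> t'" using r by auto
          have "r - t < d2" using rr t'(2) m2 by linarith
          then have "dist r t < d2" using r by (simp add: dist_real_def)
          then have "dist (dV (e r)) Dd < \<epsilon>" using d2(2)[OF rab] by (simp add: Dd_def y_def)
          then have nd: "norm (Dd - dV (e r)) \<le> \<epsilon>" by (simp add: dist_norm norm_minus_commute)
          have "Dd \<bullet> v r = dV (e r) \<bullet> v r + (Dd - dV (e r)) \<bullet> v r" by (simp add: inner_diff_left)
          also have "(Dd - dV (e r)) \<bullet> v r \<le> norm (Dd - dV (e r)) * norm (v r)"
            by (rule norm_cauchy_schwarz)
          also have "\<dots> \<le> \<epsilon> * norm (v r)" by (rule mult_right_mono[OF nd]) simp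
          finally have "Dd \<bullet> v r \<le> dV (e r) \<bullet> v r + \<epsilon> * norm (v r)" by simp
          moreover have "dV (e r) \<bullet> v r \<le> - m" using bnd[of r] rab False by simp
          ultimately show ?thesis using False by (simp add: f'_def)
        qed
        have C: "integral {t..t'} f' \<le> integral {t..t'} (\<lambda>r. - m + \<epsilon> * norm (v r))"
          by (rule integral_le[OF f'i rhsi f'le])
        have Dq: "integral {t..t'} (\<lambda>r. - m + \<epsilon> * norm (v r)) = - m * (t' - t) + \<epsilon> * integral {t..t'} (\<lambda>r. norm (v r))"
        proof -
          have "integral {t..t'} (\<lambda>r. - m + \<epsilon> * norm (v r)) = integral {t..t'} (\<lambda>r. - m) + integral {t..t'} (\<lambda>r. \<epsilon> * norm (v r))"
            by (rule integral_add) (intro integrable_const_ivl integrable_on_mult_right vi'(2))+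
          then show ?thesis using t' by simp
        qed
        have E: "norm (e t' - y) \<le> integral {t..t'} (\<lambda>r. norm (v r))"
          unfolding inc by (rule integral_norm_bound_integral[OF vi'(1) vi'(2)]) simp
        have "V (e t') - V (e t) \<le> - m * (t' - t) + 2 * \<epsilon> * integral {t..t'} (\<lambda>r. norm (v r))"
        proof -
          have "V (e t') - V (e t) \<le> Dd \<bullet> (e t' - y) + \<epsilon> * norm (e t' - y)" using A by (simp add: y_def)
          also have "Dd \<bullet> (e t' - y) \<le> - m * (t' - t) + \<epsilon> * integral {t..t'} (\<lambda>r. norm (v r))"
            using B C Dq sp inc by simp
          also have "\<epsilon> * norm (e t' - y) \<le> \<epsilon> * integral {t..t'} (\<lambda>r. norm (v r))"
            using E \<epsilon> by simp
          finally show ?thesis by simp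
        qed
        moreover have "G t' - G t = integral {t..t'} (\<lambda>r. norm (v r))" using incr(2)[of t t'] t t' by simp
        ultimately show "F t' \<le> F t" unfolding F_def by (simp add: algebra_simps)
      qed
      moreover have "0 < min d2 d3" using d2(1) d3(1) by simp
      ultimately show ?thesis by blast
    qed
    define Z where "Z = {t \<in> {a..b}. F t \<le> F a}"
    have Zc: "closed Z" unfolding Z_def
      by (rule continuous_on_closed_Collect_le[OF Fc continuous_on_const closed_atLeastAtMost])
    have aZ: "a \<in> Z" unfolding Z_def using ab by simp
    have Zb: "bdd_above Z" unfolding Z_def by (rule bdd_aboveI[of _ b]) auto
    define s where "s = Sup Z"
    have sZ: "s \<in> Z" unfolding s_def using closed_contains_Sup[OF _ Zb Zc] aZ by blast
    have sb: "s = b"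
    proof (rule ccontr)
      assume "s \<noteq> b"
      moreover have "a \<le> s" "s \<le> b" using sZ unfolding Z_def by auto
      ultimately have "s < b" by simp
      then obtain \<delta> where d: "\<delta> > 0" "\<And>t'. s < t' \<and> t' < s + \<delta> \<and> t' \<le> b \<Longrightarrow> F t' \<le> F s"
        using local[of s] \<open>a \<le> s\<close> by blast
      define t' where "t' = min (s + \<delta> / 2) b"
      have t': "s < t'" "t' < s + \<delta>" "t' \<le> b" using d(1) \<open>s < b\<close> by (auto simp: t'_def)
      have "F t' \<le> F a" using d(2)[OF conjI[OF t'(1) conjI[OF t'(2) t'(3)]]] sZ unfolding Z_def by simp
      then have "t' \<in> Z" unfolding Z_def using t' \<open>a \<le> s\<close> by simp
      then have "t' \<le> s" unfolding s_def by (rule cSup_upper[OF _ Zb])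
      then show False using t' by simp
    qed
    then have "F b \<le> F a" using sZ unfolding Z_def by simp
    then show ?thesis unfolding F_def using Ga by simp
  qed
  have "V (e b) + m * (b - a) \<le> V (e a)"
  proof (rule field_le_epsilon)
    fix \<epsilon> :: real assume \<epsilon>: "\<epsilon> > 0"
    define \<epsilon>' where "\<epsilon>' = \<epsilon> / (2 * (G b + 1))"
    have "\<epsilon>' > 0" using \<epsilon> Gb by (simp add: \<epsilon>'_def)
    then have k: "V (e b) + m * (b - a) - 2 * \<epsilon>' * G b \<le> V (e a)" by (rule key)
    have "2 * \<epsilon>' * G b \<le> \<epsilon>"
    proof -
      have "2 * \<epsilon>' * G b = \<epsilon> * (G b / (G b + 1))" using Gb by (simp add: \<epsilon>'_def field_simps)
      also have "\<dots> \<le> \<epsilon> * 1" using Gb \<epsilon> by (intro mult_left_mono) auto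
      finally show ?thesis by simp
    qed
    then show "V (e b) + m * (b - a) \<le> V (e a) + \<epsilon>" using k by linarith
  qed
  then show ?thesis by (simp add: algebra_simps)
qed

lemma CMP:
  fixes W A :: "real \<Rightarrow> real"
  assumes Wc: "continuous_on {0..t} W" and t0: "0 \<le> t"
    and AK: "class_K A" and L00: "0 \<le> L0" and u0: "0 \<le> u"
    and dec: "\<And>a b L. 0 \<le> a \<Longrightarrow> a \<le> b \<Longrightarrow> b \<le> t \<Longrightarrow> L0 \<le> L \<Longrightarrow> (\<forall>r\<in>{a..b}. L \<le> W r)
               \<Longrightarrow> W b - W a \<le> - (b - a) * A L"
    and W0: "W 0 \<le> u + t * A u"
  shows "W t \<le> max u L0"
proof (rule ccontr)
  define M where "M = max u L0"
  assume "\<not> W t \<le> max u L0"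
  then have Wt: "M < W t" by (auto simp: M_def max_def split: if_splits)
  have M0: "0 \<le> M" "u \<le> M" "L0 \<le> M" using L00 u0 by (auto simp: M_def)
  have AM: "A u \<le> A M" "0 \<le> A M" using K_le[OF AK u0 M0(2)] K_nonneg[OF AK M0(1)] by auto
  define Z where "Z = {r \<in> {0..t}. W r \<le> M}"
  show False
  proof (cases "Z = {}")
    case True
    then have "\<forall>r\<in>{0..t}. M \<le> W r" unfolding Z_def by force
    then have "W t - W 0 \<le> - (t - 0) * A M" using dec[of 0 t M] t0 M0 by simp
    moreover have "t * A u \<le> t * A M" using AM t0 by (simp add: mult_left_mono)
    ultimately have "W t \<le> u" using W0 by simp
    then show False using Wt M0 by simp
  next
    case False
    have Zc: "closed Z" unfolding Z_def
      by (rule continuous_on_closed_Collect_le[OF Wc continuous_on_const closed_atLeastAtMost])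
    have Zb: "bdd_above Z" unfolding Z_def by (rule bdd_aboveI[of _ t]) auto
    define r0 where "r0 = Sup Z"
    have r0Z: "r0 \<in> Z" unfolding r0_def using closed_contains_Sup[OF False Zb Zc] .
    then have r0: "0 \<le> r0" "r0 \<le> t" "W r0 \<le> M" unfolding Z_def by auto
    have r0t: "r0 < t" using r0 Wt by (cases "r0 = t") auto
    have above: "M < W r" if "r0 < r" "r \<le> t" for r
    proof (rule ccontr)
      assume "\<not> M < W r"
      then have "r \<in> Z" unfolding Z_def using that r0 by simp
      then have "r \<le> r0" unfolding r0_def by (rule cSup_upper[OF _ Zb])
      then show False using that by simp
    qed
    have Wr0: "M \<le> W r0"
    proof (rule ccontr)
      assume "\<not> M \<le> W r0"
      then have "W r0 < M" by simp
      moreover have "r0 \<in> {0..t}" using r0 by simp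
      ultimately obtain d where d: "d > 0" "\<And>r. r \<in> {0..t} \<Longrightarrow> dist r r0 < d \<Longrightarrow> dist (W r) (W r0) < M - W r0"
        using Wc unfolding continuous_on_iff by (metis diff_gt_0_iff_gt)
      define r where "r = min (r0 + d / 2) t"
      have r: "r0 < r" "r \<le> t" "r - r0 < d" using d(1) r0t by (auto simp: r_def)
      have "dist r r0 < d" using r by (simp add: dist_real_def)
      then have "dist (W r) (W r0) < M - W r0" using d(2)[of r] r r0 by simp
      then have "W r < M" by (simp add: dist_real_def)
      then show False using above[OF r(1,2)] by simp
    qed
    have "\<forall>r\<in>{r0..t}. M \<le> W r"
    proof
      fix r assume "r \<in> {r0..t}"
      then show "M \<le> W r" using above[of r] Wr0 by (cases "r = r0") auto
    qed
    then have "W t - W r0 \<le> - (t - r0) * A M" using dec[of r0 t M] r0 r0t M0 by simp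
    moreover have "0 \<le> (t - r0) * A M" using r0t AM by simp
    moreover have "- (t - r0) * A M = - ((t - r0) * A M)" by (simp only: mult_minus_left)
    ultimately show False using r0 Wt by linarith
  qed
qed

definition KLfun :: "(real \<Rightarrow> real) \<Rightarrow> (real \<Rightarrow> real) \<Rightarrow> (real \<Rightarrow> real) \<Rightarrow> real \<Rightarrow> real \<Rightarrow> real" where
  "KLfun A phi psi s t = phi (kinv (\<lambda>u. u + t * A u) (psi s))"

lemma H_Kinf:
  assumes AK: "class_K A" and t: "0 \<le> t" shows "class_Kinf (\<lambda>u. u + t * A u)"
proof -
  have c: "continuous_on {0..} (\<lambda>u. u + t * A u)" using AK unfolding class_K_def
    by (intro continuous_on_add continuous_on_mult continuous_on_const continuous_on_id) auto
  have z: "0 + t * A 0 = 0" using AK by (simp add: class_K_def)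
  have sm: "strict_mono_on {0..} (\<lambda>u. u + t * A u)"
  proof (rule strict_mono_onI)
    fix r s :: real assume "r \<in> {0..}" "s \<in> {0..}" "r < s"
    then have "A r \<le> A s" using K_le[OF AK] by simp
    then have "t * A r \<le> t * A s" using t by (simp add: mult_left_mono)
    then show "r + t * A r < s + t * A s" using \<open>r < s\<close> by simp
  qed
  have lim: "filterlim (\<lambda>u. u + t * A u) at_top at_top"
    unfolding filterlim_at_top eventually_at_top_linorder
  proof
    fix Z :: real
    have "Z \<le> u + t * A u" if "u \<ge> max Z 0" for u
    proof -
      have "0 \<le> A u" using K_nonneg[OF AK, of u] that by simp
      then have "0 \<le> t * A u" using t by simp
      then show ?thesis using that by simp
    qed
    then show "\<exists>N. \<forall>u\<ge>N. Z \<le> u + t * A u" by blast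
  qed
  show ?thesis unfolding class_Kinf_def class_K_def using c z sm lim by simp
qed

lemma KLfun_KL:
  assumes AK: "class_K A" and phi: "class_Kinf phi" and psi: "class_Kinf psi"
  shows "class_KL (KLfun A (kinv phi) psi)"
proof -
  have phiK: "class_K (kinv phi)" using Kinf_kinv[OF phi] class_Kinf_def by blast
  have psiK: "class_K psi" using psi class_Kinf_def by blast
  have part1: "class_K (\<lambda>s. KLfun A (kinv phi) psi s t)" if t: "0 \<le> t" for t
  proof -
    have "class_K (kinv (\<lambda>u. u + t * A u))"
      using Kinf_kinv[OF H_Kinf[OF AK t]] class_Kinf_def by blast
    then have "class_K (\<lambda>s. kinv (\<lambda>u. u + t * A u) (psi s))" by (rule K_comp[OF _ psiK])
    then show ?thesis unfolding KLfun_def by (rule K_comp[OF phiK])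
  qed
  have part2: "antimono_on {0..} (\<lambda>t. KLfun A (kinv phi) psi s t)" if s: "0 \<le> s" for s
  proof (rule monotone_onI)
    fix t1 t2 :: real assume t: "t1 \<in> {0..}" "t2 \<in> {0..}" "t1 \<le> t2"
    define S where "S = psi s"
    have S0: "0 \<le> S" using K_nonneg[OF psiK s] by (simp add: S_def)
    define u1 where "u1 = kinv (\<lambda>u. u + t1 * A u) S"
    have u1: "0 \<le> u1" "u1 + t1 * A u1 = S" using kinv[OF H_Kinf[OF AK], of t1 S] t S0 by (auto simp: u1_def)
    have "t1 * A u1 \<le> t2 * A u1" using K_nonneg[OF AK u1(1)] t by (simp add: mult_right_mono)
    then have "S \<le> u1 + t2 * A u1" using u1 by simp
    then have k: "kinv (\<lambda>u. u + t2 * A u) S \<le> u1"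
      using kinv_le_iff[OF H_Kinf[OF AK], of t2 S u1] t S0 u1 by simp
    have "0 \<le> kinv (\<lambda>u. u + t2 * A u) S" using kinv[OF H_Kinf[OF AK], of t2 S] t S0 by simp
    then have "kinv phi (kinv (\<lambda>u. u + t2 * A u) S) \<le> kinv phi u1" using K_le[OF phiK _ k] by simp
    then show "KLfun A (kinv phi) psi s t2 \<le> KLfun A (kinv phi) psi s t1"
      unfolding KLfun_def S_def[symmetric] u1_def by simp
  qed
  have part3: "((\<lambda>t. KLfun A (kinv phi) psi s t) \<longlongrightarrow> 0) at_top" if s: "0 \<le> s" for s
  proof (rule tendstoI)
    fix \<epsilon> :: real assume \<epsilon>: "\<epsilon> > 0"
    define S where "S = psi s"
    have S0: "0 \<le> S" using K_nonneg[OF psiK s] by (simp add: S_def)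
    have phiK': "class_K phi" using phi class_Kinf_def by blast
    define \<delta> where "\<delta> = phi \<epsilon> / 2"
    have pe: "0 < phi \<epsilon>" using K_pos[OF phiK' \<epsilon>] .
    then have d0: "0 < \<delta>" by (simp add: \<delta>_def)
    have Ad: "0 < A \<delta>" using K_pos[OF AK d0] .
    have "kinv phi (kinv (\<lambda>u. u + t * A u) S) < \<epsilon>" if t: "t \<ge> S / A \<delta>" for t
    proof -
      have t0: "0 \<le> t" using t S0 Ad by (meson order.trans zero_le_divide_iff less_imp_le)
      have "S \<le> t * A \<delta>" using t Ad by (simp add: pos_divide_le_eq)
      then have "S \<le> \<delta> + t * A \<delta>" using d0 by simp
      then have k: "kinv (\<lambda>u. u + t * A u) S \<le> \<delta>"
        using kinv_le_iff[OF H_Kinf[OF AK t0], of S \<delta>] S0 d0 by simp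
      have k0: "0 \<le> kinv (\<lambda>u. u + t * A u) S" using kinv[OF H_Kinf[OF AK t0] S0] by simp
      have "\<delta> < phi \<epsilon>" using pe by (simp add: \<delta>_def)
      then have "kinv (\<lambda>u. u + t * A u) S < phi \<epsilon>" using k by simp
      then have "kinv phi (kinv (\<lambda>u. u + t * A u) S) < kinv phi (phi \<epsilon>)"
        using K_less[OF phiK k0] by simp
      then show ?thesis using kinv_left[OF phi] \<epsilon> by simp
    qed
    moreover have "0 \<le> kinv phi (kinv (\<lambda>u. u + t * A u) S)" if t: "t \<ge> S / A \<delta>" for t
    proof -
      have t0: "0 \<le> t" using t S0 Ad by (meson order.trans zero_le_divide_iff less_imp_le)
      have k0: "0 \<le> kinv (\<lambda>u. u + t * A u) S" using kinv[OF H_Kinf[OF AK t0] S0] by simp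
      show ?thesis using kinv[OF phi k0] by simp
    qed
    ultimately have "\<forall>t\<ge>S / A \<delta>. dist (KLfun A (kinv phi) psi s t) 0 < \<epsilon>"
      unfolding KLfun_def S_def[symmetric] by (simp add: dist_real_def)
    then show "\<forall>\<^sub>F t in at_top. dist (KLfun A (kinv phi) psi s t) 0 < \<epsilon>"
      unfolding eventually_at_top_linorder by blast
  qed
  show ?thesis unfolding class_KL_def using part1 part2 part3 by blast
qed

lemma ISS_part:
  fixes F :: "'x::euclidean_space \<Rightarrow> 'a::euclidean_space \<Rightarrow> 'a set"
    and Ve :: "'a \<Rightarrow> real" and dVe :: "'a \<Rightarrow> 'a"
  assumes Vd: "\<forall>e. (Ve has_derivative (\<lambda>v. dVe e \<bullet> v)) (at e)" and dVc: "continuous_on UNIV dVe"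
    and psil: "class_Kinf psil" and psiu: "class_Kinf psiu"
    and sandwich: "\<forall>e. psil (norm e) \<le> Ve e \<and> Ve e \<le> psiu (norm e)"
    and ah: "class_K ah" and gam: "class_K gam"
    and PA: "\<forall>x e. gam (norm x) \<le> norm e \<longrightarrow> (\<forall>fe\<in>F x e. dVe e \<bullet> fe \<le> - ah (norm e))"
  shows "ISS_wrt_input F"
proof -
  define A where "A L = ah (kinv psiu L)" for L
  have psiuK: "class_K psiu" and psilK: "class_K psil" using psiu psil class_Kinf_def by blast+
  have kpsiuK: "class_K (kinv psiu)" and kpsilK: "class_K (kinv psil)"
    using Kinf_kinv[OF psiu] Kinf_kinv[OF psil] class_Kinf_def by blast+
  have AK: "class_K A" unfolding A_def by (rule K_comp[OF ah kpsiuK])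
  define \<beta> where "\<beta> = KLfun A (kinv psil) psiu"
  have \<beta>KL: "class_KL \<beta>" unfolding \<beta>_def by (rule KLfun_KL[OF AK psil psiu])
  define chi where "chi c = kinv psil (psiu (gam c))" for c
  have chiK: "class_K chi" unfolding chi_def by (rule K_comp[OF kpsilK K_comp[OF psiuK gam]])
  have Vc: "continuous_on UNIV Ve"
    by (rule has_derivative_continuous_on[where f' = "\<lambda>y w. dVe y \<bullet> w"]) (use Vd in simp)
  have main: "norm (e t) \<le> \<beta> (norm (e 0)) t + chi (ess_sup_norm x t)"
    if xb: "loc_ess_bounded x" and sol: "carath_solution F x T e" and t: "t \<in> {0..T}"
    for x :: "real \<Rightarrow> 'x" and T e t
  proof -
    obtain v N where T0: "T > 0" and vai: "v absolutely_integrable_on {0..T}"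
      and ee: "\<And>r. r \<in> {0..T} \<Longrightarrow> e r = e 0 + integral {0..r} v"
      and N: "negligible N" and vF: "\<And>r. r \<in> {0..T} - N \<Longrightarrow> v r \<in> F (x r) (e r)"
      using sol unfolding carath_solution_def by metis
    have vi: "v integrable_on {0..T}" and nvi: "(\<lambda>r. norm (v r)) integrable_on {0..T}"
      using vai unfolding absolutely_integrable_on_def by auto
    have t0: "0 \<le> t" "t \<le> T" using t by auto
    have ec: "continuous_on {0..T} e"
    proof (rule continuous_on_eq)
      show "continuous_on {0..T} (\<lambda>r. e 0 + integral {0..r} v)"
        by (rule continuous_on_add[OF continuous_on_const indefinite_integral_continuous_1[OF vi]])
      show "\<And>r. r \<in> {0..T} \<Longrightarrow> e 0 + integral {0..r} v = e r" using ee by metis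
    qed
    define Cs where "Cs = {c. c \<ge> 0 \<and> (\<exists>N. negligible N \<and> (\<forall>s\<in>{0..t} - N. norm (x s) \<le> c))}"
    define w where "w = ess_sup_norm x t"
    have wI: "w = Inf Cs" unfolding w_def Cs_def ess_sup_norm_def ..
    obtain c0 N0 where "negligible N0" "\<forall>s\<in>{0..t} - N0. norm (x s) \<le> c0"
      using xb t0 unfolding loc_ess_bounded_def by blast
    then have "max c0 0 \<in> Cs" unfolding Cs_def by force
    then have Csne: "Cs \<noteq> {}" by blast
    have Csb: "bdd_below Cs" unfolding Cs_def by (rule bdd_belowI[of _ 0]) auto
    have w0: "0 \<le> w" unfolding wI using Csne by (rule cInf_greatest) (auto simp: Cs_def)
    have bound_c: "norm (e t) \<le> \<beta> (norm (e 0)) t + chi c" if c: "w < c" for c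
    proof -
      obtain c' where c': "c' \<in> Cs" "c' < c" using cInf_lessD[OF Csne] c unfolding wI by blast
      then obtain N' where N': "negligible N'" "\<And>s. s \<in> {0..t} - N' \<Longrightarrow> norm (x s) \<le> c"
        and c'0: "0 \<le> c'" unfolding Cs_def by force
      have c0': "0 \<le> c" using c'0 c' by simp
      define L0 where "L0 = psiu (gam c)"
      have gc0: "0 \<le> gam c" using K_nonneg[OF gam c0'] .
      have L00: "0 \<le> L0" unfolding L0_def using K_nonneg[OF psiuK gc0] .
      define S where "S = psiu (norm (e 0))"
      have S0: "0 \<le> S" unfolding S_def using K_nonneg[OF psiuK] by simp
      define u where "u = kinv (\<lambda>u. u + t * A u) S"
      have u: "0 \<le> u" "u + t * A u = S" using kinv[OF H_Kinf[OF AK t0(1)] S0] by (auto simp: u_def)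
      define W where "W r = Ve (e r)" for r
      have Wc: "continuous_on {0..t} W" unfolding W_def
        by (rule continuous_on_compose2[OF Vc continuous_on_subset[OF ec]]) (use t0 in auto)
      have W0: "W 0 \<le> u + t * A u" using sandwich u unfolding W_def S_def by simp
      have dec: "W b - W a \<le> - (b - a) * A L"
        if ab: "0 \<le> a" "a \<le> b" "b \<le> t" and L: "L0 \<le> L" and WL: "\<forall>r\<in>{a..b}. L \<le> W r" for a b L
      proof -
        have sub: "{a..b} \<subseteq> {0..T}" using ab t0 by auto
        have vi': "v integrable_on {a..b}" "(\<lambda>r. norm (v r)) integrable_on {a..b}"
          using integrable_on_subinterval[OF vi sub] integrable_on_subinterval[OF nvi sub] by auto
        have ee': "e r = e a + integral {a..r} v" if r: "r \<in> {a..b}" for r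
        proof -
          have "integral {0..a} v + integral {a..r} v = integral {0..r} v"
            by (rule Henstock_Kurzweil_Integration.integral_combine)
               (use r ab integrable_on_subinterval[OF vi, of 0 r] t0 in auto)
          moreover have "e r = e 0 + integral {0..r} v" "e a = e 0 + integral {0..a} v"
            using ee[of r] ee[of a] r ab t0 by auto
          ultimately show ?thesis by (simp add: algebra_simps)
        qed
        have L0': "0 \<le> L" using L L00 by simp
        have bnd: "dVe (e r) \<bullet> v r \<le> - A L" if r: "r \<in> {a..b} - (N \<union> N')" for r
        proof -
          have r1: "r \<in> {0..T} - N" "r \<in> {0..t} - N'" using r ab t0 by auto
          have vr: "v r \<in> F (x r) (e r)" using vF[OF r1(1)] .
          have xr: "norm (x r) \<le> c" using N'(2)[OF r1(2)] .
          have "L \<le> psiu (norm (e r))" using WL sandwich r unfolding W_def by (meson DiffD1 order.trans)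
          then have er: "kinv psiu L \<le> norm (e r)" using kinv_le_iff[OF psiu L0'] by simp
          have "gam (norm (x r)) \<le> gam c" using K_le[OF gam _ xr] by simp
          also have "gam c = kinv psiu L0" unfolding L0_def using kinv_left[OF psiu gc0] by simp
          also have "kinv psiu L0 \<le> kinv psiu L" using K_le[OF kpsiuK L00 L] .
          finally have "gam (norm (x r)) \<le> norm (e r)" using er by simp
          then have "dVe (e r) \<bullet> v r \<le> - ah (norm (e r))" using PA vr by blast
          moreover have "ah (kinv psiu L) \<le> ah (norm (e r))"
            using K_le[OF ah _ er] kinv[OF psiu L0'] by simp
          ultimately show ?thesis unfolding A_def by simp
        qed
        have Vd': "\<And>y. (Ve has_derivative (\<lambda>w. dVe y \<bullet> w)) (at y)" using Vd by blast
        have NN: "negligible (N \<union> N')" using N N'(1) by (rule negligible_Un)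
        have "Ve (e b) - Ve (e a) \<le> - A L * (b - a)"
          by (rule DL[OF Vd' dVc vi'(1) vi'(2) ee' NN bnd ab(2)])
        moreover have "- A L * (b - a) = - (b - a) * A L" by (simp add: algebra_simps)
        ultimately show ?thesis unfolding W_def by linarith
      qed
      have Wt: "W t \<le> max u L0"
        by (rule CMP[OF Wc t0(1) AK L00 u(1) dec W0]) auto
      have "psil (norm (e t)) \<le> max u L0" using sandwich Wt unfolding W_def by (meson order.trans)
      then have "norm (e t) \<le> kinv psil (max u L0)"
        using kinv_ge_iff[OF psil, of "max u L0" "norm (e t)"] u(1) by simp
      also have "kinv psil (max u L0) \<le> kinv psil u + kinv psil L0"
      proof -
        have "0 \<le> kinv psil u" "0 \<le> kinv psil L0" using kinv[OF psil u(1)] kinv[OF psil L00] by auto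
        then show ?thesis by (cases "u \<le> L0") (auto simp: max_def)
      qed
      also have "kinv psil u = \<beta> (norm (e 0)) t" unfolding \<beta>_def KLfun_def u_def S_def ..
      also have "kinv psil L0 = chi c" unfolding chi_def L0_def ..
      finally show ?thesis .
    qed
    show ?thesis
    proof (rule ccontr)
      assume "\<not> ?thesis"
      then have gt: "\<beta> (norm (e 0)) t + chi w < norm (e t)" unfolding w_def by simp
      define \<epsilon> where "\<epsilon> = norm (e t) - (\<beta> (norm (e 0)) t + chi w)"
      have \<epsilon>: "\<epsilon> > 0" using gt by (simp add: \<epsilon>_def)
      have "continuous_on {0..} chi" using chiK class_K_def by blast
      moreover have "w \<in> {0..}" using w0 by simp
      ultimately obtain d where d: "d > 0" "\<And>c. c \<in> {0..} \<Longrightarrow> dist c w < d \<Longrightarrow> dist (chi c) (chi w) < \<epsilon>"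
        using \<epsilon> unfolding continuous_on_iff by metis
      define c where "c = w + d / 2"
      have "c \<in> {0..}" "dist c w < d" using d(1) w0 by (auto simp: c_def dist_real_def)
      then have "dist (chi c) (chi w) < \<epsilon>" using d(2) by blast
      then have "chi c < chi w + \<epsilon>" by (simp add: dist_real_def)
      moreover have "norm (e t) \<le> \<beta> (norm (e 0)) t + chi c" by (rule bound_c) (use d(1) in \<open>simp add: c_def\<close>)
      ultimately show False unfolding \<epsilon>_def by simp
    qed
  qed
  show ?thesis unfolding ISS_wrt_input_def
    using \<beta>KL chiK main by blast
qed

theorem proposition6:
  fixes f1 f2 :: "real^'n \<Rightarrow> real^'n"
    and g :: "real^'n \<Rightarrow> real^'m^'n"
    and h :: "real^'n \<Rightarrow> real^'p"
    and q :: "real^'n \<Rightarrow> real"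
    and l1 l2 :: "real^'p \<Rightarrow> real^'n"
    and k :: "real^'n \<Rightarrow> real^'m"
    and Ve :: "real^'n \<Rightarrow> real"
    and dVe :: "real^'n \<Rightarrow> real^'n"
    and \<beta>g \<beta>f psil psiu \<alpha>e \<rho>e \<theta>e :: "real \<Rightarrow> real"
  assumes f1: "C1_map f1" and f2: "C1_map f2" and g: "C1_map g" and h: "C1_map h" and q: "C1_map q"
    and partition: "proper_partition {1::nat, 2} (\<lambda>i. if i = 1 then {x. q x \<ge> 0} else {x. q x \<le> 0}) (\<lambda>i. UNIV)"
    and f1_0: "q 0 \<ge> 0 \<Longrightarrow> f1 0 = 0"
    and f2_0: "q 0 \<le> 0 \<Longrightarrow> f2 0 = 0"
    and \<beta>g: "continuous_on UNIV \<beta>g" "\<forall>s. \<beta>g s \<ge> 0" "\<forall>x. onorm (\<lambda>u. g x *v u) \<le> \<beta>g (norm x)"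
    and \<beta>f: "class_Kinf \<beta>f" "\<forall>x. norm (f1 x - f2 x) \<le> \<beta>f (norm x)"
    and l1: "C1_map l1" and l2: "C1_map l2"
    and k: "\<exists>L. L-lipschitz_on UNIV k"
    and Ve_C1: "\<forall>e. (Ve has_derivative (\<lambda>v. dVe e \<bullet> v)) (at e)" "continuous_on UNIV dVe"
    and K: "class_Kinf psil" "class_Kinf psiu" "class_Kinf \<alpha>e" "class_Kinf \<rho>e"
    and sandwich: "\<forall>e. psil (norm e) \<le> Ve e \<and> Ve e \<le> psiu (norm e)"
    and grad_bound: "\<forall>e. norm (dVe e) \<le> \<rho>e (norm e)"
    and decr1: "\<forall>x z. dVe (x - z) \<bullet> (f1 x - f1 z - l1 (h x - h z) + gtilde g k x z) \<le> - \<alpha>e (norm (x - z))"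
    and decr2: "\<forall>x z. dVe (x - z) \<bullet> (f2 x - f2 z - l2 (h x - h z) + gtilde g k x z) \<le> - \<alpha>e (norm (x - z))"
    and \<theta>e: "class_Kinf \<theta>e" "\<forall>s\<ge>0. \<theta>e s \<le> \<alpha>e s / \<rho>e s"
  shows "(\<exists>\<gamma> \<alpha>. class_K \<gamma> \<and> class_Kinf \<alpha> \<and>
            (\<forall>x e. norm e \<ge> \<gamma> (norm x) \<longrightarrow>
               (\<forall>fe\<in>Fe f1 f2 g q h l1 l2 k x e. dVe e \<bullet> fe \<le> - \<alpha> (norm e))))
       \<and> ISS_wrt_input (Fe f1 f2 g q h l1 l2 k)"
proof -
  have cf1: "continuous_on UNIV f1" using C1_cont[OF f1] .
  have cf2: "continuous_on UNIV f2" using C1_cont[OF f2] .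
  have cg: "continuous_on UNIV g" using C1_cont[OF g] .
  have ch: "continuous_on UNIV h" using C1_cont[OF h] .
  have cl1: "continuous_on UNIV l1" using C1_cont[OF l1] .
  have cl2: "continuous_on UNIV l2" using C1_cont[OF l2] .
  obtain Lk where "Lk-lipschitz_on UNIV k" using k by blast
  then have ck: "continuous_on UNIV k" by (rule lipschitz_on_continuous_on)
  define \<gamma> where "\<gamma> s = kinv \<theta>e (2 * \<beta>f s)" for s
  define \<alpha>h where "\<alpha>h s = (1/2) * \<alpha>e s" for s
  have \<theta>K: "class_K (kinv \<theta>e)" using Kinf_kinv[OF \<theta>e(1)] class_Kinf_def by blast
  have \<beta>fK: "class_K \<beta>f" using \<beta>f(1) class_Kinf_def by blast
  have \<beta>f2: "class_K (\<lambda>s. 2 * \<beta>f s)" using K_scale[OF \<beta>fK, of 2] by simp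
  have \<gamma>K: "class_K \<gamma>" unfolding \<gamma>_def using K_comp[OF \<theta>K \<beta>f2] .
  have \<alpha>hK: "class_Kinf \<alpha>h" unfolding \<alpha>h_def using Kinf_scale[OF K(3), of "1/2"] by simp
  have \<alpha>eK: "class_K \<alpha>e" and \<rho>eK: "class_K \<rho>e" using K(3) K(4) class_Kinf_def by blast+
  have PA: "\<forall>x e. \<gamma> (norm x) \<le> norm e \<longrightarrow>
      (\<forall>fe\<in>Fe f1 f2 g q h l1 l2 k x e. dVe e \<bullet> fe \<le> - \<alpha>h (norm e))"
  proof (intro allI impI)
    fix x e :: "real^'n"
    assume ge: "\<gamma> (norm x) \<le> norm e"
    define r where "r = norm e"
    define s where "s = norm x"
    have n1: "norm (dVe e) \<le> \<rho>e r" using grad_bound by (simp add: r_def)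
    have n2: "norm (f1 x - f2 x) \<le> \<beta>f s" using \<beta>f(2) by (simp add: s_def)
    have bs0: "0 \<le> \<beta>f s" using K_nonneg[OF \<beta>fK] by (simp add: s_def)
    have r0: "0 \<le> r" by (simp add: r_def)
    have "norm (dVe e) * norm (f1 x - f2 x) \<le> \<rho>e r * \<beta>f s"
      by (rule mult_mono[OF n1 n2]) (use K_nonneg[OF \<rho>eK r0] in simp_all)
    also have "\<rho>e r * \<beta>f s \<le> \<alpha>e r - \<alpha>h r"
    proof (cases "r = 0")
      case True
      then show ?thesis using \<rho>eK \<alpha>eK by (simp add: class_K_def \<alpha>h_def)
    next
      case False
      then have rp: "0 < r" using r0 by simp
      have \<rho>p: "0 < \<rho>e r" using K_pos[OF \<rho>eK rp] .
      have "\<theta>e r \<le> \<alpha>e r / \<rho>e r" using \<theta>e(2) r0 by blast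
      then have th: "\<rho>e r * \<theta>e r \<le> \<alpha>e r" using \<rho>p by (simp add: pos_le_divide_eq mult.commute)
      have "kinv \<theta>e (2 * \<beta>f s) \<le> r" using ge unfolding \<gamma>_def r_def s_def .
      then have "2 * \<beta>f s \<le> \<theta>e r" using kinv_le_iff[OF \<theta>e(1), of "2 * \<beta>f s" r] bs0 r0 by simp
      then have "\<rho>e r * (2 * \<beta>f s) \<le> \<rho>e r * \<theta>e r" using \<rho>p by (simp add: mult_left_mono)
      then show ?thesis using th unfolding \<alpha>h_def by simp
    qed
    finally have B: "norm (dVe e) * norm (f1 x - f2 x) \<le> \<alpha>e (norm e) - \<alpha>h (norm e)"
      by (simp add: r_def)
    show "\<forall>fe\<in>Fe f1 f2 g q h l1 l2 k x e. dVe e \<bullet> fe \<le> - \<alpha>h (norm e)"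
      by (rule part1[OF cf1 cf2 cg ch cl1 cl2 ck decr1 decr2 B])
  qed
  have \<alpha>hK': "class_K \<alpha>h" using \<alpha>hK class_Kinf_def by blast
  have ISS: "ISS_wrt_input (Fe f1 f2 g q h l1 l2 k)"
    by (rule ISS_part[OF Ve_C1(1) Ve_C1(2) K(1) K(2) sandwich \<alpha>hK' \<gamma>K PA])
  show ?thesis using \<gamma>K \<alpha>hK PA ISS by blast
qed

end
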